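(* Let $P$ be an irreducible semi-isotropic transition matrix on $\mathbb T=\mathbb T_q$, let $\mu$ be the associated probability measure on $\Gamma=\mathrm{Aff}(\mathbb T)$, and let $\nu$ be a $\mu$-invariant Radon measure on $\partial^*\mathbb T$. Then for all $k\ge 0$, $r\ge1$ and every $y\in T_{k,r}$, $$\nu\big(\Omega_0(y)\big)=\nu(\Omega_k)/|T_{k,r}|.$$
   Context: Tree notation: $\mathbb T=\mathbb T_q$ ($q\ge2$) is the homogeneous tree of degree $q+1$ with graph metric $d$, a fixed end $\omega$ and a root $o$. Each vertex $x$ has a unique neighbour $x^-$ (its predecessor) on the geodesic ray from $x$ to $\omega$. $\mathrm{hor}(o)=0$, $\mathrm{hor}(x)=\mathrm{hor}(x^-)+1$. Ancestors of $x$: $x,x^-,(x^-)^-,\dots$; $x\curlywedge y$ is the common ancestor of $x,y$ with maximal $\mathrm{hor}$; $\mathrm{up}(x,y)=\mathrm{hor}(x)-\mathrm{hor}(x\curlywedge y)$. $\partial\mathbb T$ is the space of ends, $\partial^*\mathbb T=\partial\mathbb T\setminus\{\omega\}$. For $\xi\in\partial^*\mathbb T$, $x\curlywedge\xi$ is the vertex of the bi-infinite geodesic from $\omega$ to $\xi$ which is an ancestor of $x$ and has maximal $\mathrm{hor}$, and $\mathrm{up}(x,\xi)=\mathrm{hor}(x)-\mathrm{hor}(x\curlywedge\xi)$. A transition matrix $P$ on $\mathbb T$ is semi-isotropic if $p(x,y)$ depends only on $(\mathrm{up}(x,y),\mathrm{up}(y,x))$. Sets: $T_{k,r}(x)=\{y:\mathrm{up}(x,y)=k,\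 \mathrm{up}(y,x)=r\}$, $\Omega_k(x)=\{\eta\in\partial^*\mathbb T:\mathrm{up}(x,\eta)=k\}$; $T_{k,r}=T_{k,r}(o)$, $\Omega_k=\Omega_k(o)$. Group: $\Gamma=\mathrm{Aff}(\mathbb T)$ is the group of all automorphisms of $\mathbb T$ fixing $\omega$ (locally compact, totally disconnected, acting transitively on $\mathbb T$ and on $\partial^*\mathbb T$); $dg$ is left Haar measure normalized so that the stabilizer $\Gamma_o$ of $o$ has measure $1$; $\mu(dg)=p(o,go)\,dg$. For a Radon measure $\nu$ on $\partial^*\mathbb T$, $\mu*\nu(E)=\int_\Gamma\nu(g^{-1}E)\,\mu(dg)$; $\nu$ is $\mu$-invariant if $\mu*\nu=\nu$. *)

theory Defs
  imports "HOL-Analysis.Analysis"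
begin

text \<open>The tree is given by its vertex type 'v and the predecessor map pred (x^- = pred x);
  its edges are the pairs {x, pred x}.  This is exactly the homogeneous tree T_q together with the end omega
  represented by the rays x, pred x, pred (pred x), ...\<close>

definition tree_with_end :: "nat \<Rightarrow> ('v \<Rightarrow> 'v) \<Rightarrow> bool" where
  "tree_with_end q pred \<longleftrightarrow>
     (\<forall>x. finite {y. pred y = x} \<and> card {y. pred y = x} = q) \<and>
     (\<forall>x n. n > 0 \<longrightarrow> (pred ^^ n) x \<noteq> x) \<and>
     (\<forall>x y. \<exists>m n. (pred ^^ m) x = (pred ^^ n) y)"

definition is_hor :: "('v \<Rightarrow> 'v) \<Rightarrow> 'v \<Rightarrow> ('v \<Rightarrow> int) \<Rightarrow> bool" where
  "is_hor pred rt hor \<longleftrightarrow> hor rt = 0 \<and> (\<forall>x. hor x = hor (pred x) + 1)"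

definition anc :: "('v \<Rightarrow> 'v) \<Rightarrow> 'v \<Rightarrow> 'v \<Rightarrow> bool" where
  "anc pred x a \<longleftrightarrow> (\<exists>n. (pred ^^ n) x = a)"

definition wedge :: "('v \<Rightarrow> 'v) \<Rightarrow> ('v \<Rightarrow> int) \<Rightarrow> 'v \<Rightarrow> 'v \<Rightarrow> 'v" where
  "wedge pred hor x y = (THE a. anc pred x a \<and> anc pred y a \<and>
      (\<forall>b. anc pred x b \<and> anc pred y b \<longrightarrow> hor b \<le> hor a))"

definition up :: "('v \<Rightarrow> 'v) \<Rightarrow> ('v \<Rightarrow> int) \<Rightarrow> 'v \<Rightarrow> 'v \<Rightarrow> nat" where
  "up pred hor x y = nat (hor x - hor (wedge pred hor x y))"

definition Tkr :: "('v \<Rightarrow> 'v) \<Rightarrow> ('v \<Rightarrow> int) \<Rightarrow> nat \<Rightarrow> nat \<Rightarrow> 'v \<Rightarrow> 'v set" where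
  "Tkr pred hor k r x = {y. up pred hor x y = k \<and> up pred hor y x = r}"

text \<open>An end xi \<noteq> omega is identified with the vertex set of the bi-infinite geodesic
  from omega to xi: a nonempty set of vertices, closed under pred, totally ordered by the
  ancestor relation, and in which every vertex has a successor.\<close>
definition ends_star :: "('v \<Rightarrow> 'v) \<Rightarrow> 'v set set" where
  "ends_star pred = {S. S \<noteq> {} \<and> (\<forall>x\<in>S. pred x \<in> S) \<and>
      (\<forall>x\<in>S. \<forall>y\<in>S. anc pred x y \<or> anc pred y x) \<and> (\<forall>x\<in>S. \<exists>y\<in>S. pred y = x)}"

definition wedge_end :: "('v \<Rightarrow> 'v) \<Rightarrow> ('v \<Rightarrow> int) \<Rightarrow> 'v \<Rightarrow> 'v set \<Rightarrow> 'v" where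
  "wedge_end pred hor x \<xi> = (THE a. a \<in> \<xi> \<and> anc pred x a \<and>
      (\<forall>b\<in>\<xi>. anc pred x b \<longrightarrow> hor b \<le> hor a))"

definition up_end :: "('v \<Rightarrow> 'v) \<Rightarrow> ('v \<Rightarrow> int) \<Rightarrow> 'v \<Rightarrow> 'v set \<Rightarrow> nat" where
  "up_end pred hor x \<xi> = nat (hor x - hor (wedge_end pred hor x \<xi>))"

definition Omega :: "('v \<Rightarrow> 'v) \<Rightarrow> ('v \<Rightarrow> int) \<Rightarrow> nat \<Rightarrow> 'v \<Rightarrow> 'v set set" where
  "Omega pred hor k x = {\<eta> \<in> ends_star pred. up_end pred hor x \<eta> = k}"

text \<open>The Borel sigma-algebra of \<partial>*T: the topology of \<partial>*T has the countable basis of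
  compact open sets {\<xi>. x lies on the geodesic omega--xi}, x a vertex.\<close>
definition ends_borel :: "('v \<Rightarrow> 'v) \<Rightarrow> 'v set set set" where
  "ends_borel pred = sigma_sets (ends_star pred) (range (\<lambda>x. {\<xi> \<in> ends_star pred. x \<in> \<xi>}))"

text \<open>Radon measures on \<partial>*T (a locally compact, second countable Hausdorff space):
  Borel measures that are finite on the compact open basic sets (hence locally finite).\<close>
definition radon_ends :: "('v \<Rightarrow> 'v) \<Rightarrow> 'v set measure \<Rightarrow> bool" where
  "radon_ends pred \<nu> \<longleftrightarrow> space \<nu> = ends_star pred \<and> sets \<nu> = ends_borel pred \<and>
      (\<forall>x. emeasure \<nu> {\<xi> \<in> ends_star pred. x \<in> \<xi>} < \<infinity>)"

text \<open>Automorphisms of T fixing omega are exactly the bijections commuting with pred.\<close>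
definition Aff :: "('v \<Rightarrow> 'v) \<Rightarrow> ('v \<Rightarrow> 'v) set" where
  "Aff pred = {g. bij g \<and> (\<forall>x. g (pred x) = pred (g x))}"

text \<open>Borel sigma-algebra of Aff(T) for the topology of pointwise convergence
  (countable subbasis {g. g x = y}).\<close>
definition Aff_borel :: "('v \<Rightarrow> 'v) \<Rightarrow> ('v \<Rightarrow> 'v) set set" where
  "Aff_borel pred = sigma_sets (Aff pred) {{g \<in> Aff pred. g x = y} | x y. True}"

definition haar :: "('v \<Rightarrow> 'v) \<Rightarrow> 'v \<Rightarrow> ('v \<Rightarrow> 'v) measure \<Rightarrow> bool" where
  "haar pred rt H \<longleftrightarrow> space H = Aff pred \<and> sets H = Aff_borel pred \<and>
      (\<forall>g\<in>Aff pred. \<forall>A\<in>sets H. emeasure H ((\<lambda>h. g \<circ> h) ` A) = emeasure H A) \<and>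
      emeasure H {g \<in> Aff pred. g rt = rt} = 1"

definition stochastic :: "('v \<Rightarrow> 'v \<Rightarrow> real) \<Rightarrow> bool" where
  "stochastic p \<longleftrightarrow> (\<forall>x y. p x y \<ge> 0) \<and> (\<forall>x. (p x has_sum 1) UNIV)"

fun mpow :: "('v \<Rightarrow> 'v \<Rightarrow> real) \<Rightarrow> nat \<Rightarrow> 'v \<Rightarrow> 'v \<Rightarrow> real" where
  "mpow p 0 x y = (if x = y then 1 else 0)"
| "mpow p (Suc n) x y = (\<Sum>\<^sub>\<infinity>z. p x z * mpow p n z y)"

definition irreducible_P :: "('v \<Rightarrow> 'v \<Rightarrow> real) \<Rightarrow> bool" where
  "irreducible_P p \<longleftrightarrow> (\<forall>x y. \<exists>n. mpow p n x y > 0)"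

definition semi_isotropic :: "('v \<Rightarrow> 'v) \<Rightarrow> ('v \<Rightarrow> int) \<Rightarrow> ('v \<Rightarrow> 'v \<Rightarrow> real) \<Rightarrow> bool" where
  "semi_isotropic pred hor p \<longleftrightarrow>
     (\<forall>x y x' y'. up pred hor x y = up pred hor x' y' \<and> up pred hor y x = up pred hor y' x'
        \<longrightarrow> p x y = p x' y')"

text \<open>mu(dg) = p(o, g o) dg; (mu * nu)(E) = \<integral> nu(g^{-1} E) mu(dg), where g acts on
  \<partial>*T by mapping geodesics: g \<cdot> \<xi> = g ` \<xi>.\<close>
definition conv :: "('v \<Rightarrow> 'v) \<Rightarrow> 'v \<Rightarrow> ('v \<Rightarrow> 'v \<Rightarrow> real) \<Rightarrow> ('v \<Rightarrow> 'v) measure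
      \<Rightarrow> 'v set measure \<Rightarrow> 'v set set \<Rightarrow> ennreal" where
  "conv pred rt p H \<nu> E =
     (\<integral>\<^sup>+ g. emeasure \<nu> ((\<lambda>\<xi>. g ` \<xi>) -` E \<inter> ends_star pred) * ennreal (p rt (g rt)) \<partial>H)"

definition mu_invariant :: "('v \<Rightarrow> 'v) \<Rightarrow> 'v \<Rightarrow> ('v \<Rightarrow> 'v \<Rightarrow> real) \<Rightarrow> ('v \<Rightarrow> 'v) measure
      \<Rightarrow> 'v set measure \<Rightarrow> bool" where
  "mu_invariant pred rt p H \<nu> \<longleftrightarrow> (\<forall>E \<in> sets \<nu>. conv pred rt p H \<nu> E = emeasure \<nu> E)"

end

theory Submission
  imports Defs
begin


locale tr =
  fixes q :: nat and pred :: "'v \<Rightarrow> 'v" and rt :: 'v and hor :: "'v \<Rightarrow> int"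
  assumes tree: "tree_with_end q pred" and ishor: "is_hor pred rt hor"
begin

lemma hor_pred: "hor (pred x) = hor x - 1"
  using ishor unfolding is_hor_def by (metis add_diff_cancel_right')

lemma hor_pn: "hor ((pred ^^ n) x) = hor x - int n"
  by (induction n) (auto simp: hor_pred)

lemma children: "finite {y. pred y = x}" "card {y. pred y = x} = q"
  using tree unfolding tree_with_end_def by auto

lemma conn: "\<exists>m n. (pred ^^ m) x = (pred ^^ n) y"
  using tree unfolding tree_with_end_def by auto

lemma anc_refl[simp]: "anc pred x x"
  unfolding anc_def by (metis funpow_0)

lemma anc_pn[simp]: "anc pred x ((pred ^^ n) x)"
  unfolding anc_def by blast

lemma anc_pred[simp]: "anc pred x (pred x)"
  unfolding anc_def by (metis One_nat_def funpow.simps(2) funpow_0 comp_apply)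

lemma anc_trans: "anc pred x a \<Longrightarrow> anc pred a b \<Longrightarrow> anc pred x b"
  unfolding anc_def by (metis funpow_add comp_apply)

lemma anc_hor: "anc pred x a \<Longrightarrow> hor a \<le> hor x"
  unfolding anc_def using hor_pn by auto

lemma anc_hor_eq: "anc pred x a \<Longrightarrow> a = (pred ^^ nat (hor x - hor a)) x"
  unfolding anc_def using hor_pn by auto

lemma anc_unique: "anc pred x a \<Longrightarrow> anc pred x b \<Longrightarrow> hor a = hor b \<Longrightarrow> a = b"
  by (metis anc_hor_eq)

lemma anc_total: "anc pred x a \<Longrightarrow> anc pred x b \<Longrightarrow> hor a \<le> hor b \<Longrightarrow> anc pred b a"
proof -
  assume a: "anc pred x a" and b: "anc pred x b" and h: "hor a \<le> hor b"
  obtain m where m: "a = (pred ^^ m) x" using a unfolding anc_def by auto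
  obtain n where n: "b = (pred ^^ n) x" using b unfolding anc_def by auto
  have "n \<le> m" using h m n hor_pn by auto
  then have "a = (pred ^^ (m - n)) b" using m n by (metis funpow_add le_add_diff_inverse2 comp_apply)
  then show ?thesis unfolding anc_def by blast
qed

lemma anc_antisym: "anc pred x a \<Longrightarrow> anc pred a x \<Longrightarrow> a = x"
  by (meson anc_hor anc_refl anc_unique order_antisym)

lemma wedge_ex: "\<exists>a. anc pred x a \<and> anc pred y a \<and> (\<forall>b. anc pred x b \<and> anc pred y b \<longrightarrow> hor b \<le> hor a)"
proof -
  obtain m n where mn: "(pred ^^ m) x = (pred ^^ n) y" using conn by blast
  define n0 where "n0 = (LEAST k. anc pred y ((pred ^^ k) x))"
  have ex: "anc pred y ((pred ^^ m) x)" using mn by simp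
  have n0: "anc pred y ((pred ^^ n0) x)" unfolding n0_def by (rule LeastI, rule ex)
  have "hor b \<le> hor ((pred ^^ n0) x)" if "anc pred x b" "anc pred y b" for b
  proof -
    from that(1) obtain j where j0: "(pred ^^ j) x = b" unfolding anc_def by blast
    note j = j0[symmetric]
    have "n0 \<le> j" unfolding n0_def by (rule Least_le) (use that j in simp)
    then show ?thesis using j hor_pn by simp
  qed
  then show ?thesis using n0 by (intro exI[of _ "(pred ^^ n0) x"]) auto
qed

lemma wedge_char:
  assumes "anc pred x a" "anc pred y a" "\<forall>b. anc pred x b \<and> anc pred y b \<longrightarrow> hor b \<le> hor a"
  shows "wedge pred hor x y = a"
  unfolding wedge_def
proof (rule the_equality)
  show "anc pred x a \<and> anc pred y a \<and> (\<forall>b. anc pred x b \<and> anc pred y b \<longrightarrow> hor b \<le> hor a)" using assms by blast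
next
  fix a' assume "anc pred x a' \<and> anc pred y a' \<and> (\<forall>b. anc pred x b \<and> anc pred y b \<longrightarrow> hor b \<le> hor a')"
  then show "a' = a" using assms by (meson anc_unique order_antisym)
qed

lemma wedge_props:
  "anc pred x (wedge pred hor x y)" "anc pred y (wedge pred hor x y)"
  "anc pred x b \<Longrightarrow> anc pred y b \<Longrightarrow> hor b \<le> hor (wedge pred hor x y)"
  using wedge_ex[of x y] wedge_char by metis+

lemma wedge_common: "anc pred x b \<Longrightarrow> anc pred y b \<Longrightarrow> anc pred (wedge pred hor x y) b"
  using wedge_props anc_total by metis

end

context tr begin

definition EE :: "'v \<Rightarrow> 'v set set" where "EE x = {\<xi> \<in> ends_star pred. x \<in> \<xi>}"

lemma ends_D:
  assumes "\<xi> \<in> ends_star pred"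
  shows "\<xi> \<noteq> {}" "\<And>x. x \<in> \<xi> \<Longrightarrow> pred x \<in> \<xi>"
    "\<And>x y. x \<in> \<xi> \<Longrightarrow> y \<in> \<xi> \<Longrightarrow> anc pred x y \<or> anc pred y x"
    "\<And>x. x \<in> \<xi> \<Longrightarrow> \<exists>y\<in>\<xi>. pred y = x"
  using assms unfolding ends_star_def by auto

lemma ends_pn: "\<xi> \<in> ends_star pred \<Longrightarrow> z \<in> \<xi> \<Longrightarrow> (pred ^^ n) z \<in> \<xi>"
  by (induction n) (auto dest: ends_D)

lemma ends_anc: "\<xi> \<in> ends_star pred \<Longrightarrow> z \<in> \<xi> \<Longrightarrow> anc pred z b \<Longrightarrow> b \<in> \<xi>"
  unfolding anc_def using ends_pn by blast

lemma ends_desc: "\<xi> \<in> ends_star pred \<Longrightarrow> w \<in> \<xi> \<Longrightarrow> \<exists>y\<in>\<xi>. (pred ^^ n) y = w"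
proof (induction n)
  case 0 then show ?case by auto
next
  case (Suc n)
  then obtain y' where y': "y' \<in> \<xi>" "(pred ^^ n) y' = w" by auto
  obtain y where "y \<in> \<xi>" "pred y = y'" using ends_D(4)[OF Suc(2) y'(1)] by auto
  then show ?case using y' by (intro bexI[of _ y]) (auto simp: funpow_Suc_right simp del: funpow.simps)
qed

lemma ends_eq: "\<xi> \<in> ends_star pred \<Longrightarrow> a \<in> \<xi> \<Longrightarrow> b \<in> \<xi> \<Longrightarrow> hor a = hor b \<Longrightarrow> a = b"
  using ends_D(3) anc_unique anc_refl by blast

lemma wend_ex:
  assumes "\<xi> \<in> ends_star pred"
  shows "\<exists>a. a \<in> \<xi> \<and> anc pred x a \<and> (\<forall>b\<in>\<xi>. anc pred x b \<longrightarrow> hor b \<le> hor a)"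
proof -
  obtain z where z: "z \<in> \<xi>" using ends_D(1)[OF assms] by auto
  obtain m n where mn: "(pred ^^ m) x = (pred ^^ n) z" using conn by blast
  have ex: "(pred ^^ m) x \<in> \<xi>" using mn ends_pn[OF assms z] by simp
  define n0 where "n0 = (LEAST k. (pred ^^ k) x \<in> \<xi>)"
  have n0: "(pred ^^ n0) x \<in> \<xi>" unfolding n0_def by (rule LeastI, rule ex)
  have "hor b \<le> hor ((pred ^^ n0) x)" if "b \<in> \<xi>" "anc pred x b" for b
  proof -
    from that(2) obtain j where j0: "(pred ^^ j) x = b" unfolding anc_def by blast
    have "n0 \<le> j" unfolding n0_def by (rule Least_le) (use that j0 in simp)
    then show ?thesis using j0 hor_pn by auto
  qed
  then show ?thesis using n0 by (intro exI[of _ "(pred ^^ n0) x"]) auto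
qed

lemma wend_char:
  assumes "\<xi> \<in> ends_star pred" "a \<in> \<xi>" "anc pred x a" "\<forall>b\<in>\<xi>. anc pred x b \<longrightarrow> hor b \<le> hor a"
  shows "wedge_end pred hor x \<xi> = a"
  unfolding wedge_end_def
proof (rule the_equality)
  show "a \<in> \<xi> \<and> anc pred x a \<and> (\<forall>b\<in>\<xi>. anc pred x b \<longrightarrow> hor b \<le> hor a)" using assms by blast
next
  fix a' assume "a' \<in> \<xi> \<and> anc pred x a' \<and> (\<forall>b\<in>\<xi>. anc pred x b \<longrightarrow> hor b \<le> hor a')"
  then show "a' = a" using assms by (meson anc_unique order_antisym)
qed

lemma wend_props:
  assumes "\<xi> \<in> ends_star pred"
  shows "wedge_end pred hor x \<xi> \<in> \<xi>" "anc pred x (wedge_end pred hor x \<xi>)"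
    "b \<in> \<xi> \<Longrightarrow> anc pred x b \<Longrightarrow> hor b \<le> hor (wedge_end pred hor x \<xi>)"
proof -
  obtain a where a: "a \<in> \<xi>" "anc pred x a" "\<forall>b\<in>\<xi>. anc pred x b \<longrightarrow> hor b \<le> hor a"
    using wend_ex[OF assms, of x] by blast
  have e: "wedge_end pred hor x \<xi> = a" by (rule wend_char[OF assms a])
  show "wedge_end pred hor x \<xi> \<in> \<xi>" "anc pred x (wedge_end pred hor x \<xi>)"
    "b \<in> \<xi> \<Longrightarrow> anc pred x b \<Longrightarrow> hor b \<le> hor (wedge_end pred hor x \<xi>)"
    using a unfolding e by auto
qed

lemma Omega0: "Omega pred hor 0 x = EE x"
proof -
  have "up_end pred hor x \<xi> = 0 \<longleftrightarrow> x \<in> \<xi>" if "\<xi> \<in> ends_star pred" for \<xi>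
  proof
    assume "up_end pred hor x \<xi> = 0"
    then have "hor x \<le> hor (wedge_end pred hor x \<xi>)" unfolding up_end_def by simp
    then have "hor x = hor (wedge_end pred hor x \<xi>)" using anc_hor[OF wend_props(2)[OF that, of x]] by linarith
    then have "x = wedge_end pred hor x \<xi>" using anc_unique[OF anc_refl wend_props(2)[OF that]] by blast
    then show "x \<in> \<xi>" using wend_props(1)[OF that, of x] by argo
  next
    assume "x \<in> \<xi>"
    then have "wedge_end pred hor x \<xi> = x" using wend_char[OF that \<open>x \<in> \<xi>\<close> anc_refl] anc_hor by blast
    then show "up_end pred hor x \<xi> = 0" unfolding up_end_def by simp
  qed
  then show ?thesis unfolding Omega_def EE_def by blast
qed

end

context tr begin

lemma wedge_sym: "wedge pred hor x y = wedge pred hor y x"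
  by (rule wedge_char) (use wedge_props in auto)

lemma Tkr_iff: "y \<in> Tkr pred hor k r rt \<longleftrightarrow>
   hor (wedge pred hor rt y) = hor rt - int k \<and> hor y = hor (wedge pred hor rt y) + int r"
proof -
  have a: "hor (wedge pred hor rt y) \<le> hor rt" "hor (wedge pred hor rt y) \<le> hor y"
    using anc_hor wedge_props(1,2) by blast+
  then show ?thesis unfolding Tkr_def up_def using wedge_sym[of y rt] by auto
qed

lemma Tkr_wedge: "y \<in> Tkr pred hor k r rt \<Longrightarrow> wedge pred hor rt y = (pred ^^ k) rt"
  using Tkr_iff anc_unique[OF wedge_props(1) anc_pn] hor_pn by simp

lemma Tkr_pn: "y \<in> Tkr pred hor k r rt \<Longrightarrow> (pred ^^ r) y = (pred ^^ k) rt"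
proof -
  assume y: "y \<in> Tkr pred hor k r rt"
  have "anc pred y (wedge pred hor rt y)" by (rule wedge_props(2))
  then have "wedge pred hor rt y = (pred ^^ r) y"
    using anc_unique[OF _ anc_pn] hor_pn y Tkr_iff by simp
  then show ?thesis using Tkr_wedge[OF y] by simp
qed

lemma finite_desc: "finite {z. (pred ^^ n) z = c}"
proof (induction n)
  case 0 then show ?case by simp
next
  case (Suc n)
  have "{z. (pred ^^ Suc n) z = c} = (\<Union>u\<in>{z. (pred ^^ n) z = c}. {z. pred z = u})"
    by (auto simp: funpow_Suc_right simp del: funpow.simps)
  then show ?case using Suc children(1) by auto
qed

lemma Tkr_finite: "finite (Tkr pred hor k r rt)"
  by (rule finite_subset[OF _ finite_desc[of r "(pred ^^ k) rt"]]) (use Tkr_pn in auto)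

lemma Omega_part:
  assumes r: "r \<ge> 1"
  shows "Omega pred hor k rt = (\<Union>y\<in>Tkr pred hor k r rt. EE y)"
proof (intro equalityI subsetI)
  fix \<eta> assume "\<eta> \<in> Omega pred hor k rt"
  then have e: "\<eta> \<in> ends_star pred" and u: "up_end pred hor rt \<eta> = k" unfolding Omega_def by auto
  define w where "w = wedge_end pred hor rt \<eta>"
  have w: "w \<in> \<eta>" "anc pred rt w" "\<And>b. b \<in> \<eta> \<Longrightarrow> anc pred rt b \<Longrightarrow> hor b \<le> hor w"
    using wend_props[OF e] unfolding w_def by auto
  have hw: "hor w = hor rt - int k" using u anc_hor[OF w(2)] unfolding up_end_def w_def[symmetric] by auto
  obtain y where y: "y \<in> \<eta>" "(pred ^^ r) y = w" using ends_desc[OF e w(1)] by blast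
  have ay: "anc pred y w" using y(2) anc_pn by blast
  have wy: "wedge pred hor rt y = w"
    by (rule wedge_char[OF w(2) ay]) (use w(3) ends_anc[OF e y(1)] in blast)
  have "hor y = hor w + int r" using y(2) hor_pn[of r y] by simp
  then have "y \<in> Tkr pred hor k r rt" unfolding Tkr_iff wy using hw by simp
  then show "\<eta> \<in> (\<Union>y\<in>Tkr pred hor k r rt. EE y)" unfolding EE_def using e y(1) by blast
next
  fix \<eta> assume "\<eta> \<in> (\<Union>y\<in>Tkr pred hor k r rt. EE y)"
  then obtain y where y: "y \<in> Tkr pred hor k r rt" "y \<in> \<eta>" and e: "\<eta> \<in> ends_star pred"
    unfolding EE_def by blast
  define c where "c = wedge pred hor rt y"
  have c: "anc pred rt c" "anc pred y c" "\<And>b. anc pred rt b \<Longrightarrow> anc pred y b \<Longrightarrow> hor b \<le> hor c"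
    unfolding c_def using wedge_props by auto
  have hc: "hor c = hor rt - int k" "hor y = hor c + int r" using y(1) unfolding Tkr_iff c_def by auto
  have "wedge_end pred hor rt \<eta> = c"
  proof (rule wend_char[OF e ends_anc[OF e y(2) c(2)] c(1)], intro ballI impI)
    fix b assume b: "b \<in> \<eta>" "anc pred rt b"
    show "hor b \<le> hor c"
    proof (cases "anc pred y b")
      case True then show ?thesis using c(3) b by blast
    next
      case False
      then have "anc pred b y" using ends_D(3)[OF e b(1) y(2)] by blast
      then have "anc pred rt y" using anc_trans b(2) by blast
      then have "hor y \<le> hor c" using c(3) anc_refl by blast
      then show ?thesis using hc r by simp
    qed
  qed
  then have "up_end pred hor rt \<eta> = k" unfolding up_end_def using hc by simp
  then show "\<eta> \<in> Omega pred hor k rt" unfolding Omega_def using e by blast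
qed

lemma Tkr_disj: "disjoint_family_on EE (Tkr pred hor k r rt)"
unfolding disjoint_family_on_def proof (intro ballI impI)
  fix y y' assume y: "y \<in> Tkr pred hor k r rt" and y': "y' \<in> Tkr pred hor k r rt" and ne: "y \<noteq> y'"
  have "hor y = hor y'" using y y' unfolding Tkr_iff by simp
  then show "EE y \<inter> EE y' = {}" using ends_eq ne unfolding EE_def by blast
qed

end

context tr begin

lemma Aff_D: "h \<in> Aff pred \<Longrightarrow> bij h" "h \<in> Aff pred \<Longrightarrow> h (pred x) = pred (h x)"
  unfolding Aff_def by auto

lemma Aff_comp: "h \<in> Aff pred \<Longrightarrow> g \<in> Aff pred \<Longrightarrow> h \<circ> g \<in> Aff pred"
  unfolding Aff_def by (auto intro: bij_comp)

lemma Aff_inv: "h \<in> Aff pred \<Longrightarrow> inv h \<in> Aff pred"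
proof -
  assume h: "h \<in> Aff pred"
  have b: "bij h" using Aff_D[OF h] by auto
  have "inv h (pred x) = pred (inv h x)" for x
  proof -
    have "h (pred (inv h x)) = pred x" using Aff_D(2)[OF h] b by (simp add: bij_inv_eq_iff surj_f_inv_f bij_is_surj)
    then show ?thesis using b by (metis bij_inv_eq_iff)
  qed
  then show ?thesis unfolding Aff_def using bij_imp_bij_inv[OF b] by auto
qed

lemma Aff_id: "id \<in> Aff pred" unfolding Aff_def by auto

lemma Aff_pn: "h \<in> Aff pred \<Longrightarrow> h ((pred ^^ n) x) = (pred ^^ n) (h x)"
  by (induction n) (auto simp: Aff_D)

lemma Aff_anc: "h \<in> Aff pred \<Longrightarrow> anc pred (h x) (h a) \<longleftrightarrow> anc pred x a"
proof -
  assume h: "h \<in> Aff pred"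
  have i: "inj h" using Aff_D(1)[OF h] bij_is_inj by auto
  show ?thesis unfolding anc_def using Aff_pn[OF h] i by (metis injD)
qed

lemma Aff_hor: assumes h: "h \<in> Aff pred" "h rt = rt" shows "hor (h x) = hor x"
proof -
  define D where "D z = hor (h z) - hor z" for z
  have "D ((pred ^^ n) z) = D z" for n z
    unfolding D_def using Aff_pn[OF h(1)] hor_pn by simp
  moreover obtain m n where "(pred ^^ m) x = (pred ^^ n) rt" using conn by blast
  ultimately have "D x = D rt" by metis
  then show ?thesis using h(2) unfolding D_def by simp
qed

lemma Aff_wedge: assumes h: "h \<in> Aff pred" "h rt = rt"
  shows "wedge pred hor (h x) (h y) = h (wedge pred hor x y)"
proof (rule wedge_char)
  show "anc pred (h x) (h (wedge pred hor x y))" "anc pred (h y) (h (wedge pred hor x y))"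
    using Aff_anc[OF h(1)] wedge_props by auto
  have s: "surj h" using Aff_D(1)[OF h(1)] bij_is_surj by auto
  show "\<forall>b. anc pred (h x) b \<and> anc pred (h y) b \<longrightarrow> hor b \<le> hor (h (wedge pred hor x y))"
  proof (intro allI impI)
    fix b assume b: "anc pred (h x) b \<and> anc pred (h y) b"
    obtain b' where b': "b = h b'" using s by (metis surjD)
    then have "anc pred x b'" "anc pred y b'" using b Aff_anc[OF h(1)] by auto
    then show "hor b \<le> hor (h (wedge pred hor x y))" using wedge_props(3) b' Aff_hor[OF h] by simp
  qed
qed

lemma Aff_up: assumes h: "h \<in> Aff pred" "h rt = rt"
  shows "up pred hor (h x) (h y) = up pred hor x y"
  unfolding up_def Aff_wedge[OF h] Aff_hor[OF h] ..

lemma Aff_ends: assumes g: "g \<in> Aff pred" and e: "\<xi> \<in> ends_star pred"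
  shows "g ` \<xi> \<in> ends_star pred"
proof -
  note D = ends_D[OF e]
  have "g ` \<xi> \<noteq> {}" using D(1) by auto
  moreover have "\<forall>x\<in>g ` \<xi>. pred x \<in> g ` \<xi>"
  proof
    fix x assume "x \<in> g ` \<xi>"
    then obtain x' where x': "x' \<in> \<xi>" "x = g x'" by auto
    then show "pred x \<in> g ` \<xi>" using D(2)[OF x'(1)] Aff_D(2)[OF g, of x'] by (metis image_eqI)
  qed
  moreover have "\<forall>x\<in>g ` \<xi>. \<forall>y\<in>g ` \<xi>. anc pred x y \<or> anc pred y x" using D(3) Aff_anc[OF g] by force
  moreover have "\<forall>x\<in>g ` \<xi>. \<exists>y\<in>g ` \<xi>. pred y = x"
  proof
    fix x assume "x \<in> g ` \<xi>"
    then obtain x' where x': "x' \<in> \<xi>" "x = g x'" by auto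
    then obtain y where "y \<in> \<xi>" "pred y = x'" using D(4) by blast
    then show "\<exists>y\<in>g ` \<xi>. pred y = x" using x' Aff_D(2)[OF g] by force
  qed
  ultimately show ?thesis unfolding ends_star_def by blast
qed

end

context tr begin

definition beta :: "'v \<Rightarrow> nat \<Rightarrow> 'v" where
  "beta v = (SOME f. bij_betw f {..<q} {y. pred y = v})"

lemma beta_bij: "bij_betw (beta v) {..<q} {y. pred y = v}"
proof -
  have "\<exists>f. bij_betw f {..<q} {y. pred y = v}"
    using ex_bij_betw_nat_finite[OF children(1)[of v]] children(2)[of v] by (auto simp: atLeast0LessThan)
  then show ?thesis unfolding beta_def by (rule someI_ex)
qed

definition idx :: "'v \<Rightarrow> nat" where "idx x = inv_into {..<q} (beta (pred x)) x"

lemma idx_lt: "idx x < q"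
proof -
  have "x \<in> beta (pred x) ` {..<q}" using beta_bij[of "pred x"] unfolding bij_betw_def by auto
  then show ?thesis unfolding idx_def by (metis inv_into_into lessThan_iff)
qed

lemma beta_idx: "beta (pred x) (idx x) = x"
proof -
  have "x \<in> beta (pred x) ` {..<q}" using beta_bij[of "pred x"] unfolding bij_betw_def by auto
  then show ?thesis unfolding idx_def by (rule f_inv_into_f)
qed

lemma pred_beta: "i < q \<Longrightarrow> pred (beta v i) = v"
  using beta_bij[of v] unfolding bij_betw_def by auto

lemma idx_beta: "i < q \<Longrightarrow> idx (beta v i) = i"
  unfolding idx_def pred_beta using beta_bij[of v] unfolding bij_betw_def
  by (simp add: inv_into_f_f)

primrec GG :: "'v \<Rightarrow> nat \<Rightarrow> 'v \<Rightarrow> 'v" where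
  "GG b' 0 x = b'"
| "GG b' (Suc n) x = beta (GG b' n (pred x)) (idx x)"

lemma GG_pred: "pred (GG b' (Suc n) x) = GG b' n (pred x)"
  using pred_beta idx_lt by simp

lemma GG_pn: "(pred ^^ n) (GG b' n x) = b'"
proof (induction n arbitrary: x)
  case 0 then show ?case by simp
next
  case (Suc n)
  have "(pred ^^ Suc n) (GG b' (Suc n) x) = (pred ^^ n) (pred (GG b' (Suc n) x))"
    by (simp only: funpow_Suc_right comp_apply)
  then show ?case using GG_pred Suc by simp
qed

lemma GG_inv: "(pred ^^ n) x = b \<Longrightarrow> GG b n (GG b' n x) = x"
proof (induction n arbitrary: x)
  case 0 then show ?case by simp
next
  case (Suc n)
  define u where "u = GG b' (Suc n) x"
  have pu: "pred u = GG b' n (pred x)" unfolding u_def by (rule GG_pred)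
  have "(pred ^^ n) (pred x) = b" using Suc(2) by (simp only: funpow_Suc_right comp_apply)
  then have ih: "GG b n (pred u) = pred x" using Suc(1) pu by simp
  have iu: "idx u = idx x" unfolding u_def using idx_beta idx_lt by simp
  have "GG b (Suc n) u = x"
  proof -
    have "GG b (Suc n) u = beta (GG b n (pred u)) (idx u)" by (simp only: GG.simps)
    also have "\<dots> = beta (pred x) (idx x)" using ih iu by simp
    also have "\<dots> = x" by (rule beta_idx)
    finally show ?thesis .
  qed
  then show ?case unfolding u_def .
qed

lemma swap_exists:
  assumes ne: "a \<noteq> a'" and sib: "pred a = pred a'"
  shows "\<exists>s\<in>Aff pred. s a = a' \<and> (\<forall>x. \<not> anc pred x a \<and> \<not> anc pred x a' \<longrightarrow> s x = x)"
proof -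
  have ha: "hor a = hor a'" using sib hor_pred by (metis diff_add_cancel)
  define D where "D x = nat (hor x - hor a)" for x
  define s where "s x = (if anc pred x a then GG a' (D x) x else if anc pred x a' then GG a (D x) x else x)" for x
  have pnD: "anc pred x c \<Longrightarrow> hor c = hor a \<Longrightarrow> (pred ^^ D x) x = c" for x c
    unfolding D_def using anc_hor_eq by metis
  have hGG: "hor (GG c (D x) x) = hor x" if "anc pred x a \<or> anc pred x a'" and "hor c = hor a" for x c
  proof -
    have "hor c = hor (GG c (D x) x) - int (D x)" using hor_pn GG_pn by metis
    moreover have "hor a \<le> hor x" using that(1) anc_hor[of x a] anc_hor[of x a'] ha by auto
    ultimately show ?thesis using that(2) unfolding D_def by simp
  qed
  have A: "anc pred (s x) a' \<and> \<not> anc pred (s x) a \<and> D (s x) = D x \<and> s (s x) = x" if x: "anc pred x a" for x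
  proof -
    have sx: "s x = GG a' (D x) x" unfolding s_def using x by simp
    have a1: "anc pred (s x) a'" unfolding sx anc_def using GG_pn by blast
    have a2: "\<not> anc pred (s x) a" using a1 anc_unique ha ne by blast
    have d: "D (s x) = D x" unfolding D_def using hGG[of x a'] x ha by (simp add: sx)
    have "s (s x) = GG a (D x) (s x)" using a1 a2 d unfolding s_def[of "s x"] by simp
    also have "\<dots> = x" unfolding sx by (rule GG_inv[OF pnD[OF x refl]])
    finally show ?thesis using a1 a2 d by simp
  qed
  have B: "anc pred (s x) a \<and> \<not> anc pred (s x) a' \<and> D (s x) = D x \<and> s (s x) = x" if x: "anc pred x a'" for x
  proof -
    have xa: "\<not> anc pred x a" using x anc_unique ha ne by blast
    have sx: "s x = GG a (D x) x" unfolding s_def using x xa by simp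
    have a1: "anc pred (s x) a" unfolding sx anc_def using GG_pn by blast
    have a2: "\<not> anc pred (s x) a'" using a1 anc_unique ha ne by blast
    have d: "D (s x) = D x" unfolding D_def using hGG[of x a] x ha by (simp add: sx)
    have "s (s x) = GG a' (D x) (s x)" using a1 a2 d unfolding s_def[of "s x"] by simp
    also have "\<dots> = x" unfolding sx by (rule GG_inv[OF pnD[OF x ha[symmetric]]])
    finally show ?thesis using a1 a2 d by simp
  qed
  have C: "\<not> anc pred x a \<Longrightarrow> \<not> anc pred x a' \<Longrightarrow> s x = x" for x unfolding s_def by simp
  have ss: "s (s x) = x" for x
  proof (cases "anc pred x a")
    case True then show ?thesis using A by blast
  next
    case False then show ?thesis using B C by (cases "anc pred x a'") auto
  qed
  have bij: "bij s" by (rule o_bij[of s s]) (use ss in auto)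
  have pc: "s (pred x) = pred (s x)" for x
  proof (cases "anc pred x a \<or> anc pred x a'")
    case False
    then have "\<not> anc pred (pred x) a" "\<not> anc pred (pred x) a'"
      using anc_trans[OF anc_pred] by blast+
    then show ?thesis using C False by simp
  next
    case True
    then obtain c c' where cc: "anc pred x c" "hor c = hor a" "c' \<noteq> c" "hor c' = hor a"
      "s x = GG c' (D x) x" "\<And>z. anc pred z c \<Longrightarrow> s z = GG c' (D z) z" "pred c = pred c'"
      "\<not> anc pred (pred c) a" "\<not> anc pred (pred c) a'"
    proof (cases "anc pred x a")
      case True
      have "\<not> anc pred (pred a) a" "\<not> anc pred (pred a) a'" using anc_hor hor_pred ha by force+
      moreover have "anc pred z a \<Longrightarrow> s z = GG a' (D z) z" for z
        unfolding s_def by simp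
      ultimately show ?thesis using that[of a a'] True ne[symmetric] ha[symmetric] sib by blast
    next
      case False
      then have xa': "anc pred x a'" using True by blast
      have "\<not> anc pred (pred a) a" "\<not> anc pred (pred a) a'" using anc_hor hor_pred ha by force+
      moreover have "anc pred z a' \<Longrightarrow> s z = GG a (D z) z" for z
        unfolding s_def using anc_unique ha ne by auto
      moreover have "s x = GG a (D x) x" using B False xa' unfolding s_def by simp
      ultimately show ?thesis using that[of a' a] xa' ne ha sib by simp
    qed
    show ?thesis
    proof (cases "x = c")
      case True
      have "s (pred c) = pred c" using C cc(8,9) by simp
      moreover have "D c = 0" unfolding D_def using cc(2) by simp
      ultimately show ?thesis using True cc(5,7) by simp
    next
      case False
      have "hor c < hor x" using anc_hor[OF cc(1)] anc_unique[OF anc_refl cc(1)] False by force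
      then obtain n where n: "D x = Suc n" unfolding D_def using cc(2) by (metis Suc_pred' zero_less_nat_eq diff_gt_0_iff_gt)
      have "(pred ^^ D x) x = c" using pnD[OF cc(1,2)] .
      then have "(pred ^^ n) (pred x) = c" using n by (simp only: funpow_Suc_right comp_apply)
      then have pa: "anc pred (pred x) c" unfolding anc_def by blast
      have dp: "D (pred x) = n" using n hor_pred unfolding D_def by auto
      have "s (pred x) = GG c' n (pred x)" using cc(6)[OF pa] dp by simp
      also have "\<dots> = pred (GG c' (Suc n) x)" using GG_pred by simp
      finally show ?thesis using cc(5) n by simp
    qed
  qed
  have "s \<in> Aff pred" unfolding Aff_def using bij pc by auto
  moreover have "s a = a'" unfolding s_def D_def by simp
  ultimately show ?thesis using C by blast
qed

end

context tr begin

lemma pn_Suc': "(pred ^^ Suc d) y = pred ((pred ^^ d) y)" by simp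

lemma move_claim:
  "(pred ^^ Suc d) y = (pred ^^ Suc d) y' \<Longrightarrow>
   \<exists>h\<in>Aff pred. h y = y' \<and> (\<forall>x. \<not> anc pred x ((pred ^^ d) y) \<and> \<not> anc pred x ((pred ^^ d) y') \<longrightarrow> h x = x)"
proof (induction d arbitrary: y y')
  case 0
  show ?case
  proof (cases "y = y'")
    case True then show ?thesis using Aff_id by (intro bexI[of _ id]) auto
  next
    case False
    then show ?thesis using swap_exists[of y y'] 0 by simp
  qed
next
  case (Suc d)
  define a where "a = (pred ^^ Suc d) y"
  define a' where "a' = (pred ^^ Suc d) y'"
  have sib: "pred a = pred a'" using Suc(2) unfolding a_def a'_def by (simp only: pn_Suc')
  have ay: "anc pred y a" unfolding a_def by (rule anc_pn)
  have sub: "anc pred x ((pred ^^ d) z) \<Longrightarrow> anc pred x ((pred ^^ Suc d) z)" for x z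
    using anc_trans[OF _ anc_pred] by (simp only: pn_Suc')
  show ?case
  proof (cases "a = a'")
    case True
    obtain h where h: "h \<in> Aff pred" "h y = y'"
      "\<forall>x. \<not> anc pred x ((pred ^^ d) y) \<and> \<not> anc pred x ((pred ^^ d) y') \<longrightarrow> h x = x"
      using Suc(1)[of y y'] True unfolding a_def a'_def by blast
    then show ?thesis using sub by (intro bexI[of _ h]) blast+
  next
    case False
    obtain s where s: "s \<in> Aff pred" "s a = a'" "\<forall>x. \<not> anc pred x a \<and> \<not> anc pred x a' \<longrightarrow> s x = x"
      using swap_exists[OF False sib] by blast
    have "(pred ^^ Suc d) (s y) = a'" using Aff_pn[OF s(1)] s(2) unfolding a_def by metis
    then obtain h where h: "h \<in> Aff pred" "h (s y) = y'"
      "\<forall>x. \<not> anc pred x ((pred ^^ d) (s y)) \<and> \<not> anc pred x ((pred ^^ d) y') \<longrightarrow> h x = x"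
      using Suc(1)[of "s y" y'] unfolding a'_def by blast
    have "anc pred x ((pred ^^ d) (s y)) \<Longrightarrow> anc pred x a'" for x
      using sub \<open>(pred ^^ Suc d) (s y) = a'\<close> by metis
    moreover have "anc pred x ((pred ^^ d) y') \<Longrightarrow> anc pred x a'" for x
      using sub unfolding a'_def by blast
    ultimately have "\<forall>x. \<not> anc pred x a \<and> \<not> anc pred x a' \<longrightarrow> (h \<circ> s) x = x"
      using h(3) s(3) by auto
    moreover have "(h \<circ> s) y = y'" using h(2) by simp
    ultimately show ?thesis using Aff_comp[OF h(1) s(1)] unfolding a_def a'_def by blast
  qed
qed

lemma Tkr_trans:
  assumes r: "r \<ge> 1" and y: "y \<in> Tkr pred hor k r rt" and y': "y' \<in> Tkr pred hor k r rt"
  shows "\<exists>h\<in>Aff pred. h rt = rt \<and> h y = y'"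
proof -
  obtain d where d: "r = Suc d" using r by (cases r) auto
  have "(pred ^^ Suc d) y = (pred ^^ Suc d) y'" using Tkr_pn[OF y] Tkr_pn[OF y'] d by simp
  then obtain h where h: "h \<in> Aff pred" "h y = y'"
    "\<forall>x. \<not> anc pred x ((pred ^^ d) y) \<and> \<not> anc pred x ((pred ^^ d) y') \<longrightarrow> h x = x"
    using move_claim by blast
  have na: "\<not> anc pred rt ((pred ^^ d) z)" if z: "z \<in> Tkr pred hor k r rt" for z
  proof
    assume "anc pred rt ((pred ^^ d) z)"
    then have "hor ((pred ^^ d) z) \<le> hor (wedge pred hor rt z)" using wedge_props(3) anc_pn by blast
    moreover have "hor z = hor (wedge pred hor rt z) + int r" using z Tkr_iff by blast
    ultimately show False using hor_pn[of d z] d by simp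
  qed
  show ?thesis using h na[OF y] na[OF y'] by blast
qed

end


lemma nn_int_le:
  assumes into: "\<And>x. x \<in> space M \<Longrightarrow> L x \<in> space M"
    and onto: "space M \<subseteq> L ` space M"
    and ms: "\<And>A. A \<in> sets M \<Longrightarrow> L -` A \<inter> space M \<in> sets M \<and> emeasure M (L -` A \<inter> space M) = emeasure M A"
  shows "integral\<^sup>N M f \<le> integral\<^sup>N M (\<lambda>x. f (L x))"
  unfolding nn_integral_def
proof (rule SUP_least)
  fix g assume g: "g \<in> {g. simple_function M g \<and> g \<le> f}"
  have im: "(\<lambda>x. g (L x)) ` space M = g ` space M" using into onto by force
  have pre: "(\<lambda>x. g (L x)) -` {c} \<inter> space M = L -` (g -` {c} \<inter> space M) \<inter> space M" for c
    using into by auto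
  have sf: "simple_function M (\<lambda>x. g (L x))"
    unfolding simple_function_def im pre
  proof (intro conjI ballI)
    show "finite (g ` space M)" using g unfolding simple_function_def by auto
    fix c assume "c \<in> g ` space M"
    then have "g -` {c} \<inter> space M \<in> sets M" using g unfolding simple_function_def by auto
    then show "L -` (g -` {c} \<inter> space M) \<inter> space M \<in> sets M" using ms by blast
  qed
  have le: "(\<lambda>x. g (L x)) \<le> (\<lambda>x. f (L x))" using g by (auto simp: le_fun_def)
  have "integral\<^sup>S M g = integral\<^sup>S M (\<lambda>x. g (L x))"
    unfolding simple_integral_def im pre
  proof (rule sum.cong[OF refl])
    fix c assume "c \<in> g ` space M"
    then have gc: "g -` {c} \<inter> space M \<in> sets M" using g unfolding simple_function_def by auto
    show "c * emeasure M (g -` {c} \<inter> space M) = c * emeasure M (L -` (g -` {c} \<inter> space M) \<inter> space M)"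
      using ms[OF gc] by argo
  qed
  then show "integral\<^sup>S M g \<le> (SUP g\<in>{g. simple_function M g \<and> g \<le> (\<lambda>x. f (L x))}. integral\<^sup>S M g)"
    using sf le by (intro SUP_upper2[of "\<lambda>x. g (L x)"]) auto
qed

context tr begin

lemma Aff_image_sets:
  assumes k: "k \<in> Aff pred" and A: "A \<in> sigma_sets (Aff pred) {{g \<in> Aff pred. g x = y} | x y. True}"
  shows "(\<lambda>g. k \<circ> g) ` A \<in> sigma_sets (Aff pred) {{g \<in> Aff pred. g x = y} | x y. True}"
  using A
proof (induction rule: sigma_sets.induct)
  case (Basic a)
  then obtain x y where a: "a = {g \<in> Aff pred. g x = y}" by blast
  have b: "bij k" using Aff_D(1)[OF k] .
  have eqa: "(\<lambda>g. k \<circ> g) ` a = {g \<in> Aff pred. g x = k y}"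
  proof (intro equalityI subsetI)
    fix g assume "g \<in> (\<lambda>g. k \<circ> g) ` a" then show "g \<in> {g \<in> Aff pred. g x = k y}"
      using a Aff_comp[OF k] by auto
  next
    fix g assume g: "g \<in> {g \<in> Aff pred. g x = k y}"
    have "inv k \<circ> g \<in> a" using g a Aff_comp[OF Aff_inv[OF k]] b by (auto simp: bij_is_inj)
    moreover have "g = k \<circ> (inv k \<circ> g)" using b by (auto simp: bij_is_surj surj_f_inv_f)
    ultimately show "g \<in> (\<lambda>g. k \<circ> g) ` a" by blast
  qed
  have "(\<lambda>g. k \<circ> g) ` a \<in> sigma_sets (Aff pred) {{g \<in> Aff pred. g x = y} | x y. True}"
    unfolding eqa by (rule sigma_sets.Basic) blast
  then show ?case .
next
  case Empty then show ?case by (simp add: sigma_sets.Empty)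
next
  case (Compl a)
  have b: "bij k" using Aff_D(1)[OF k] .
  have inj: "inj (\<lambda>g. k \<circ> g)" using b by (metis bij_is_inj fun.inj_map)
  have onto: "(\<lambda>g. k \<circ> g) ` Aff pred = Aff pred"
  proof (intro equalityI subsetI)
    fix g assume "g \<in> (\<lambda>g. k \<circ> g) ` Aff pred" then show "g \<in> Aff pred" using Aff_comp[OF k] by auto
  next
    fix g assume g: "g \<in> Aff pred"
    have "g = k \<circ> (inv k \<circ> g)" using b by (auto simp: bij_is_surj surj_f_inv_f)
    then show "g \<in> (\<lambda>g. k \<circ> g) ` Aff pred" using Aff_comp[OF Aff_inv[OF k] g] by blast
  qed
  have eqc: "(\<lambda>g. k \<circ> g) ` (Aff pred - a) = Aff pred - (\<lambda>g. k \<circ> g) ` a"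
    by (subst image_set_diff[OF inj]) (simp only: onto)
  have "(\<lambda>g. k \<circ> g) ` (Aff pred - a) \<in> sigma_sets (Aff pred) {{g \<in> Aff pred. g x = y} | x y. True}"
    unfolding eqc by (rule sigma_sets.Compl) (rule Compl.IH)
  then show ?case .
next
  case (Union a)
  then show ?case by (simp add: image_UN sigma_sets.Union)
qed

lemma haar_shift:
  assumes H: "haar pred rt H" and k: "k \<in> Aff pred"
  shows "\<And>A. A \<in> sets H \<Longrightarrow> (\<lambda>g. k \<circ> g) -` A \<inter> space H \<in> sets H \<and>
            emeasure H ((\<lambda>g. k \<circ> g) -` A \<inter> space H) = emeasure H A"
    "\<And>x. x \<in> space H \<Longrightarrow> k \<circ> x \<in> space H"
    "space H \<subseteq> (\<lambda>g. k \<circ> g) ` space H"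
proof -
  have sp: "space H = Aff pred" and st: "sets H = Aff_borel pred" using H unfolding haar_def by auto
  have b: "bij k" using Aff_D(1)[OF k] .
  have ki: "inv k \<in> Aff pred" using Aff_inv[OF k] .
  fix A assume A: "A \<in> sets H"
  have sub: "A \<subseteq> Aff pred" using sets.sets_into_space[OF A] sp by simp
  have eq: "(\<lambda>g. k \<circ> g) -` A \<inter> space H = (\<lambda>g. inv k \<circ> g) ` A"
  proof (intro equalityI subsetI)
    fix g assume g: "g \<in> (\<lambda>g. k \<circ> g) -` A \<inter> space H"
    have "g = inv k \<circ> (k \<circ> g)" using b by (auto simp: bij_is_inj inv_f_f)
    then show "g \<in> (\<lambda>g. inv k \<circ> g) ` A" using g by blast
  next
    fix g assume "g \<in> (\<lambda>g. inv k \<circ> g) ` A"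
    then obtain a where a: "a \<in> A" "g = inv k \<circ> a" by blast
    have "k \<circ> g = a" using a(2) b by (auto simp: bij_is_surj surj_f_inv_f)
    then show "g \<in> (\<lambda>g. k \<circ> g) -` A \<inter> space H" using a sub Aff_comp[OF ki] sp by auto
  qed
  have "(\<lambda>g. inv k \<circ> g) ` A \<in> sets H"
    using Aff_image_sets[OF ki] A st unfolding Aff_borel_def by simp
  moreover have "emeasure H ((\<lambda>g. inv k \<circ> g) ` A) = emeasure H A"
    using H ki A unfolding haar_def by blast
  ultimately show "(\<lambda>g. k \<circ> g) -` A \<inter> space H \<in> sets H \<and>
            emeasure H ((\<lambda>g. k \<circ> g) -` A \<inter> space H) = emeasure H A" using eq by simp
next
  have sp: "space H = Aff pred" using H unfolding haar_def by auto
  fix x assume "x \<in> space H" then show "k \<circ> x \<in> space H" using Aff_comp[OF k] sp by simp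
next
  have sp: "space H = Aff pred" using H unfolding haar_def by auto
  have b: "bij k" using Aff_D(1)[OF k] .
  show "space H \<subseteq> (\<lambda>g. k \<circ> g) ` space H"
  proof
    fix g assume g: "g \<in> space H"
    have "g = k \<circ> (inv k \<circ> g)" using b by (auto simp: bij_is_surj surj_f_inv_f)
    then show "g \<in> (\<lambda>g. k \<circ> g) ` space H" using Aff_comp[OF Aff_inv[OF k]] g sp by blast
  qed
qed

lemma haar_int_inv:
  assumes H: "haar pred rt H" and k: "k \<in> Aff pred"
  shows "integral\<^sup>N H f = integral\<^sup>N H (\<lambda>g. f (k \<circ> g))"
proof (rule antisym)
  show "integral\<^sup>N H f \<le> integral\<^sup>N H (\<lambda>g. f (k \<circ> g))"
    by (rule nn_int_le[OF haar_shift(2,3,1)[OF H k]])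
  have ki: "inv k \<in> Aff pred" using Aff_inv[OF k] .
  have "integral\<^sup>N H (\<lambda>g. f (k \<circ> g)) \<le> integral\<^sup>N H (\<lambda>g. f (k \<circ> (inv k \<circ> g)))"
    by (rule nn_int_le[OF haar_shift(2,3,1)[OF H ki]])
  also have "(\<lambda>g. f (k \<circ> (inv k \<circ> g))) = f"
  proof
    fix g :: "'v \<Rightarrow> 'v" have "k \<circ> (inv k \<circ> g) = g" using Aff_D(1)[OF k]
      by (auto simp: bij_is_surj surj_f_inv_f)
    then show "f (k \<circ> (inv k \<circ> g)) = f g" by simp
  qed
  finally show "integral\<^sup>N H (\<lambda>g. f (k \<circ> g)) \<le> integral\<^sup>N H f" .
qed

end

context tr begin

lemma EE_sets: "radon_ends pred \<nu> \<Longrightarrow> EE x \<in> sets \<nu>"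
  unfolding radon_ends_def ends_borel_def EE_def by (auto intro: sigma_sets.Basic)

lemma nu_inv:
  assumes H: "haar pred rt H" and R: "radon_ends pred \<nu>" and MI: "mu_invariant pred rt p H \<nu>"
    and SI: "semi_isotropic pred hor p" and h: "h \<in> Aff pred" "h rt = rt"
  shows "emeasure \<nu> (EE (h y)) = emeasure \<nu> (EE y)"
proof -
  define I where "I w g = emeasure \<nu> ((\<lambda>\<xi>. g ` \<xi>) -` EE w \<inter> ends_star pred) * ennreal (p rt (g rt))"
    for w and g :: "'v \<Rightarrow> 'v"
  have conv: "conv pred rt p H \<nu> (EE w) = integral\<^sup>N H (I w)" for w
    unfolding conv_def I_def ..
  have sp: "space H = Aff pred" using H unfolding haar_def by auto
  have key: "I (h y) (h \<circ> g) = I y g" if g: "g \<in> Aff pred" for g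
  proof -
    have inj: "inj h" using Aff_D(1)[OF h(1)] bij_is_inj by auto
    have s1: "(\<lambda>\<xi>. (h \<circ> g) ` \<xi>) -` EE (h y) \<inter> ends_star pred = (\<lambda>\<xi>. g ` \<xi>) -` EE y \<inter> ends_star pred"
    proof (intro equalityI subsetI)
      fix \<xi> assume x: "\<xi> \<in> (\<lambda>\<xi>. (h \<circ> g) ` \<xi>) -` EE (h y) \<inter> ends_star pred"
      then have "h y \<in> h ` (g ` \<xi>)" unfolding EE_def by (simp add: image_comp)
      then have "y \<in> g ` \<xi>" using inj by (auto dest: injD)
      then show "\<xi> \<in> (\<lambda>\<xi>. g ` \<xi>) -` EE y \<inter> ends_star pred"
        using x Aff_ends[OF g] unfolding EE_def by auto
    next
      fix \<xi> assume x: "\<xi> \<in> (\<lambda>\<xi>. g ` \<xi>) -` EE y \<inter> ends_star pred"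
      then have "y \<in> g ` \<xi>" unfolding EE_def by auto
      then have "h y \<in> (h \<circ> g) ` \<xi>" by (auto simp: image_comp[symmetric])
      then show "\<xi> \<in> (\<lambda>\<xi>. (h \<circ> g) ` \<xi>) -` EE (h y) \<inter> ends_star pred"
        using x Aff_ends[OF Aff_comp[OF h(1) g]] unfolding EE_def by auto
    qed
    have "up pred hor rt (h (g rt)) = up pred hor rt (g rt)"
      using Aff_up[OF h, of rt "g rt"] h(2) by simp
    moreover have "up pred hor (h (g rt)) rt = up pred hor (g rt) rt"
      using Aff_up[OF h, of "g rt" rt] h(2) by simp
    ultimately have "p rt (h (g rt)) = p rt (g rt)" using SI unfolding semi_isotropic_def by blast
    then show ?thesis unfolding I_def s1 by simp
  qed
  have "emeasure \<nu> (EE (h y)) = integral\<^sup>N H (I (h y))"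
    using MI EE_sets[OF R] conv unfolding mu_invariant_def by metis
  also have "\<dots> = integral\<^sup>N H (\<lambda>g. I (h y) (h \<circ> g))" by (rule haar_int_inv[OF H h(1)])
  also have "\<dots> = integral\<^sup>N H (I y)" by (rule nn_integral_cong) (use key sp in auto)
  also have "\<dots> = emeasure \<nu> (EE y)"
    using MI EE_sets[OF R] conv unfolding mu_invariant_def by metis
  finally show ?thesis .
qed

end

theorem lemma4p2:
  fixes q :: nat and pred :: "'v \<Rightarrow> 'v" and rt :: 'v and hor :: "'v \<Rightarrow> int"
    and p :: "'v \<Rightarrow> 'v \<Rightarrow> real" and H :: "('v \<Rightarrow> 'v) measure" and \<nu> :: "'v set measure"
  assumes "q \<ge> 2"
    and "tree_with_end q pred"
    and "is_hor pred rt hor"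
    and "stochastic p" and "irreducible_P p" and "semi_isotropic pred hor p"
    and "haar pred rt H"
    and "radon_ends pred \<nu>"
    and "mu_invariant pred rt p H \<nu>"
    and "r \<ge> 1"
    and "y \<in> Tkr pred hor k r rt"
  shows "emeasure \<nu> (Omega pred hor 0 y) = emeasure \<nu> (Omega pred hor k rt) / of_nat (card (Tkr pred hor k r rt))"
proof -
  interpret tr q pred rt hor using assms(2,3) by unfold_locales
  define T where "T = Tkr pred hor k r rt"
  have fin: "finite T" unfolding T_def by (rule Tkr_finite)
  have ne: "card T \<noteq> 0" using fin assms(11) unfolding T_def[symmetric] by auto
  have eq: "emeasure \<nu> (EE y') = emeasure \<nu> (EE y)" if y': "y' \<in> T" for y'
  proof -
    obtain h where h: "h \<in> Aff pred" "h rt = rt" "h y = y'"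
      using Tkr_trans[OF assms(10) assms(11) y'[unfolded T_def]] by blast
    show ?thesis using nu_inv[OF assms(7,8,9,6) h(1,2), of y] h(3) by simp
  qed
  have "emeasure \<nu> (Omega pred hor k rt) = emeasure \<nu> (\<Union>y'\<in>T. EE y')"
    unfolding T_def using Omega_part[OF assms(10)] by simp
  also have "\<dots> = (\<Sum>y'\<in>T. emeasure \<nu> (EE y'))"
    by (rule sum_emeasure[symmetric]) (use EE_sets[OF assms(8)] Tkr_disj fin in \<open>auto simp: T_def\<close>)
  also have "\<dots> = of_nat (card T) * emeasure \<nu> (EE y)" using eq by simp
  finally have "emeasure \<nu> (Omega pred hor k rt) / of_nat (card T) = emeasure \<nu> (EE y)"
    using ne by (simp add: mult.commute[of "of_nat (card T)"] ennreal_mult_divide_eq)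
  then show ?thesis unfolding Omega0 T_def by simp
qed


end
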